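(* Assume the setting below with $h$ taking values in $[0,1]$, $n\ge 2m$, $\delta\in(0,1)$, and $\eta$ symmetric. Then with probability at least $1-\delta$, \[ |U_{n}-\theta|\le\sqrt{\frac{2W_{n}}{\lfloor n/m\rfloor}\log\frac{3}{\delta}}+\left(\frac{\sqrt{2}}{2}+\frac{\sqrt{42}}{6}\right)\sqrt{\frac{2}{\lfloor n/m\rfloor\lfloor n/(2m)\rfloor}}\log\frac{3}{\delta}+\frac{4}{3\lfloor n/m\rfloor}\log\frac{3}{\delta}. \] In particular, if $n$ is divisible by $2m$, then with probability at least $1-\delta$, \[ |U_{n}-\theta|\le\sqrt{\frac{2mW_{n}}{n}\log\frac{3}{\delta}}+\frac{\left(4+\sqrt{2}\left[3+\sqrt{21}\right]\right)m}{3n}\log\frac{3}{\delta}. \]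
   Context: Let $\mathbb{X}\subseteq\mathbb{R}^d$ and let $\bm X_1,\dots,\bm X_n\in\mathbb{X}$ be IID with law $F$. Let $m\ge1$ and let $h:\mathbb{X}^m\to[0,1]$ be a measurable symmetric kernel of order $m$. Let $\theta=\mathbb{E}_F h(\bm X_1,\dots,\bm X_m)$ and $U_n=\binom{n}{m}^{-1}\sum_{1\le i_1<\dots<i_m\le n}h(\bm X_{i_1},\dots,\bm X_{i_m})$. Define $\eta(\bm x_1,\dots,\bm x_{2m})=\tfrac12[h(\bm x_1,\dots,\bm x_m)-h(\bm x_{m+1},\dots,\bm x_{2m})]^2$, call $\eta$ symmetric if it is invariant under every permutation of its $2m$ arguments, and let $W_n=\binom{n}{2m}^{-1}\sum_{1\le i_1<\dots<i_{2m}\le n}\eta(\bm X_{i_1},\dots,\bm X_{i_{2m}})$. $\lfloor\cdot\rfloor$ is the floor function. *)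

theory Defs
  imports "HOL-Probability.Probability"
begin

text \<open>Arguments of a kernel of order k are represented as extensional functions
  on the index set {..<k}.\<close>

definition ustat :: "nat \<Rightarrow> nat \<Rightarrow> ((nat \<Rightarrow> 'x) \<Rightarrow> real) \<Rightarrow> (nat \<Rightarrow> 'x) \<Rightarrow> real" where
  "ustat n k g x =
     (\<Sum>S | S \<subseteq> {..<n} \<and> card S = k. g (\<lambda>j\<in>{..<k}. x (sorted_list_of_set S ! j)))
       / real (n choose k)"

definition eta :: "nat \<Rightarrow> ((nat \<Rightarrow> 'x) \<Rightarrow> real) \<Rightarrow> (nat \<Rightarrow> 'x) \<Rightarrow> real" where
  "eta m h x = (1/2) * (h (\<lambda>j\<in>{..<m}. x j) - h (\<lambda>j\<in>{..<m}. x (m + j)))^2"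

definition symmetric_kernel :: "'x set \<Rightarrow> nat \<Rightarrow> ((nat \<Rightarrow> 'x) \<Rightarrow> real) \<Rightarrow> bool" where
  "symmetric_kernel A k g \<longleftrightarrow>
     (\<forall>x \<in> PiE {..<k} (\<lambda>_. A). \<forall>p. p permutes {..<k} \<longrightarrow> g (x \<circ> p) = g x)"

end

theory Submission
  imports Defs
begin


lemma sym_bij:
  assumes sym: "symmetric_kernel A k g"
  and f1: "bij_betw f1 {..<k} S" and f2: "bij_betw f2 {..<k} S"
  and x: "\<And>i. i \<in> S \<Longrightarrow> x i \<in> A"
  shows "g (\<lambda>j\<in>{..<k}. x (f1 j)) = g (\<lambda>j\<in>{..<k}. x (f2 j))"
proof -
  define p where "p = (\<lambda>j. if j < k then inv_into {..<k} f2 (f1 j) else j)"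
  have "bij_betw (inv_into {..<k} f2 \<circ> f1) {..<k} {..<k}"
    using f1 f2 bij_betw_inv_into bij_betw_trans by blast
  then have "bij_betw p {..<k} {..<k}"
    by (rule bij_betw_cong[THEN iffD1, rotated]) (auto simp: p_def)
  then have pp: "p permutes {..<k}"
    by (rule bij_imp_permutes) (auto simp: p_def)
  have eq: "(\<lambda>j\<in>{..<k}. x (f2 j)) \<circ> p = (\<lambda>j\<in>{..<k}. x (f1 j))"
  proof
    fix j show "((\<lambda>j\<in>{..<k}. x (f2 j)) \<circ> p) j = (\<lambda>j\<in>{..<k}. x (f1 j)) j"
    proof (cases "j < k")
      case True
      have "f1 j \<in> S" using f1 True bij_betwE by blast
      then have "f1 j \<in> f2 ` {..<k}" using f2 by (simp add: bij_betw_def)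
      then have "f2 (inv_into {..<k} f2 (f1 j)) = f1 j" by (rule f_inv_into_f)
      moreover have "inv_into {..<k} f2 (f1 j) < k"
        using inv_into_into[OF \<open>f1 j \<in> f2 ` {..<k}\<close>] by simp
      ultimately show ?thesis using True by (simp add: p_def)
    next
      case False
      then show ?thesis by (simp add: p_def)
    qed
  qed
  have mem: "(\<lambda>j\<in>{..<k}. x (f2 j)) \<in> PiE {..<k} (\<lambda>_. A)"
  proof -
    have "\<And>j. j<k \<Longrightarrow> x (f2 j) \<in> A" using f2 x by (meson bij_betwE lessThan_iff)
    then show ?thesis by (simp add: restrict_PiE_iff)
  qed
  show ?thesis using sym pp mem eq unfolding symmetric_kernel_def by metis
qed




lemma exists_perm_map:
  fixes n :: nat and B S :: "nat set"
  assumes B: "B \<subseteq> {..<n}" and S: "S \<subseteq> {..<n}" and c: "card B = card S"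
  shows "\<exists>\<sigma>. \<sigma> permutes {..<n} \<and> \<sigma> ` B = S"
proof -
  have fB: "finite B" by (rule finite_subset[OF B]) simp
  have fS: "finite S" by (rule finite_subset[OF S]) simp
  obtain f where f: "bij_betw f B S" using finite_same_card_bij[OF fB fS c] by blast
  have "card ({..<n} - B) = card ({..<n} - S)"
    using B S c fB fS by (simp add: card_Diff_subset)
  then obtain f' where f': "bij_betw f' ({..<n} - B) ({..<n} - S)"
    using finite_same_card_bij by (metis finite_Diff finite_lessThan)
  define \<sigma> where "\<sigma> = (\<lambda>x. if x \<in> B then f x else if x < n then f' x else x)"
  have b1: "bij_betw \<sigma> B S" using f by (rule bij_betw_cong[THEN iffD1, rotated]) (auto simp: \<sigma>_def)
  have b2: "bij_betw \<sigma> ({..<n} - B) ({..<n} - S)"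
    using f' by (rule bij_betw_cong[THEN iffD1, rotated]) (auto simp: \<sigma>_def)
  have "bij_betw \<sigma> (B \<union> ({..<n} - B)) (S \<union> ({..<n} - S))"
    by (rule bij_betw_combine[OF b1 b2]) auto
  moreover have "B \<union> ({..<n} - B) = {..<n}" "S \<union> ({..<n} - S) = {..<n}" using B S by auto
  ultimately have "bij_betw \<sigma> {..<n} {..<n}" by simp
  then have "\<sigma> permutes {..<n}"
    by (rule bij_imp_permutes) (use B in \<open>auto simp: \<sigma>_def\<close>)
  moreover have "\<sigma> ` B = S" using b1 by (simp add: bij_betw_def)
  ultimately show ?thesis by blast
qed

lemma fiber_card:
  fixes n :: nat and B S :: "nat set"
  assumes B: "B \<subseteq> {..<n}" and S: "S \<subseteq> {..<n}" and c: "card S = card B"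
  shows "card {\<pi>. \<pi> permutes {..<n} \<and> \<pi> ` B = S} = card {\<pi>. \<pi> permutes {..<n} \<and> \<pi> ` B = B}"
proof -
  obtain \<sigma> where s: "\<sigma> permutes {..<n}" "\<sigma> ` B = S" using exists_perm_map[OF B S c[symmetric]] by blast
  have "bij_betw (\<lambda>\<tau>. \<sigma> \<circ> \<tau>) {\<pi>. \<pi> permutes {..<n} \<and> \<pi> ` B = B} {\<pi>. \<pi> permutes {..<n} \<and> \<pi> ` B = S}"
  proof (rule bij_betw_byWitness[where f'="\<lambda>\<pi>. inv \<sigma> \<circ> \<pi>"])
    show "\<forall>a\<in>{\<pi>. \<pi> permutes {..<n} \<and> \<pi> ` B = B}. inv \<sigma> \<circ> (\<sigma> \<circ> a) = a"
      using permutes_inv_o(2)[OF s(1)] by (simp add: o_assoc)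
    show "\<forall>a'\<in>{\<pi>. \<pi> permutes {..<n} \<and> \<pi> ` B = S}. \<sigma> \<circ> (inv \<sigma> \<circ> a') = a'"
      using permutes_inv_o(1)[OF s(1)] by (simp add: o_assoc)
    show "(\<circ>) \<sigma> ` {\<pi>. \<pi> permutes {..<n} \<and> \<pi> ` B = B} \<subseteq> {\<pi>. \<pi> permutes {..<n} \<and> \<pi> ` B = S}"
    proof
      fix x assume "x \<in> (\<circ>) \<sigma> ` {\<pi>. \<pi> permutes {..<n} \<and> \<pi> ` B = B}"
      then obtain \<pi> where p: "\<pi> permutes {..<n}" "\<pi> ` B = B" "x = \<sigma> \<circ> \<pi>" by auto
      have "(\<sigma> \<circ> \<pi>) ` B = \<sigma> ` (\<pi> ` B)" by (simp only: image_comp)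
      also have "\<dots> = S" using p(2) s(2) by simp
      finally have "(\<sigma> \<circ> \<pi>) ` B = S" .
      moreover have "\<sigma> \<circ> \<pi> permutes {..<n}" by (rule permutes_compose[OF p(1) s(1)])
      ultimately show "x \<in> {\<pi>. \<pi> permutes {..<n} \<and> \<pi> ` B = S}" using p(3) by blast
    qed
    have "inv \<sigma> ` S = B" unfolding s(2)[symmetric] by (rule image_inv_f_f[OF permutes_inj[OF s(1)]])
    show "(\<lambda>\<pi>. inv \<sigma> \<circ> \<pi>) ` {\<pi>. \<pi> permutes {..<n} \<and> \<pi> ` B = S} \<subseteq> {\<pi>. \<pi> permutes {..<n} \<and> \<pi> ` B = B}"
    proof
      fix x assume "x \<in> (\<lambda>\<pi>. inv \<sigma> \<circ> \<pi>) ` {\<pi>. \<pi> permutes {..<n} \<and> \<pi> ` B = S}"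
      then obtain \<pi> where p: "\<pi> permutes {..<n}" "\<pi> ` B = S" "x = inv \<sigma> \<circ> \<pi>" by auto
      have "(inv \<sigma> \<circ> \<pi>) ` B = inv \<sigma> ` (\<pi> ` B)" by (simp only: image_comp)
      also have "\<dots> = B" using p(2) \<open>inv \<sigma> ` S = B\<close> by simp
      finally have "(inv \<sigma> \<circ> \<pi>) ` B = B" .
      moreover have "inv \<sigma> \<circ> \<pi> permutes {..<n}" by (rule permutes_compose[OF p(1) permutes_inv[OF s(1)]])
      ultimately show "x \<in> {\<pi>. \<pi> permutes {..<n} \<and> \<pi> ` B = B}" using p(3) by blast
    qed
  qed
  then show ?thesis by (simp add: bij_betw_same_card)
qed

lemma perm_avg:
  fixes F :: "nat set \<Rightarrow> real"
  assumes B: "B \<subseteq> {..<n}"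
  shows "(\<Sum>\<pi>\<in>{\<pi>. \<pi> permutes {..<n}}. F (\<pi> ` B)) / real (card {\<pi>. \<pi> permutes {..<n}})
       = (\<Sum>S | S \<subseteq> {..<n} \<and> card S = card B. F S) / real (n choose card B)"
proof -
  define G where "G = {\<pi>. \<pi> permutes {..<n}}"
  define Sk where "Sk = {S. S \<subseteq> {..<n} \<and> card S = card B}"
  define c where "c = card {\<pi>. \<pi> permutes {..<n} \<and> \<pi> ` B = B}"
  have fG: "finite G" unfolding G_def by (rule finite_permutations) simp
  have fSk: "finite Sk" unfolding Sk_def by (rule finite_subset[of _ "Pow {..<n}"]) auto
  have fB: "finite B" using B finite_subset by blast
  have img: "(\<lambda>\<pi>. \<pi> ` B) ` G \<subseteq> Sk"
  proof
    fix S assume "S \<in> (\<lambda>\<pi>. \<pi> ` B) ` G"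
    then obtain \<pi> where p: "\<pi> permutes {..<n}" "S = \<pi> ` B" by (auto simp: G_def)
    have "\<pi> ` B \<subseteq> \<pi> ` {..<n}" using B by blast
    then have "S \<subseteq> {..<n}" using p permutes_image[OF p(1)] by simp
    moreover have "card S = card B"
      using card_image[OF inj_on_subset[OF permutes_inj[OF p(1)] subset_UNIV]] p(2) by simp
    ultimately show "S \<in> Sk" by (simp add: Sk_def)
  qed
  have key: "(\<Sum>\<pi>\<in>G. F' (\<pi> ` B)) = real c * (\<Sum>S\<in>Sk. F' S)" for F' :: "nat set \<Rightarrow> real"
  proof -
    have "(\<Sum>\<pi>\<in>G. F' (\<pi> ` B)) = (\<Sum>S\<in>Sk. \<Sum>\<pi>\<in>{\<pi>. \<pi> \<in> G \<and> \<pi> ` B = S}. F' (\<pi> ` B))"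
      by (rule sum.group[OF fG fSk img, symmetric])
    also have "\<dots> = (\<Sum>S\<in>Sk. real c * F' S)"
    proof (rule sum.cong[OF refl])
      fix S assume S: "S \<in> Sk"
      have "(\<Sum>\<pi>\<in>{\<pi>. \<pi> \<in> G \<and> \<pi> ` B = S}. F' (\<pi> ` B)) = (\<Sum>\<pi>\<in>{\<pi>. \<pi> \<in> G \<and> \<pi> ` B = S}. F' S)"
        by (rule sum.cong) auto
      also have "\<dots> = real (card {\<pi>. \<pi> \<in> G \<and> \<pi> ` B = S}) * F' S" by simp
      also have "card {\<pi>. \<pi> \<in> G \<and> \<pi> ` B = S} = c"
        unfolding c_def G_def using fiber_card[OF B] S by (simp add: Sk_def)
      finally show "(\<Sum>\<pi>\<in>{\<pi>. \<pi> \<in> G \<and> \<pi> ` B = S}. F' (\<pi> ` B)) = real c * F' S" .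
    qed
    finally show ?thesis by (simp add: sum_distrib_left)
  qed
  have cG: "real (card G) = real c * real (n choose card B)"
    using key[of "\<lambda>_. 1"] n_subsets[of "{..<n}" "card B"] by (simp add: Sk_def)
  have "c \<noteq> 0"
  proof -
    have "id \<in> {\<pi>. \<pi> permutes {..<n} \<and> \<pi> ` B = B}" by simp
    moreover have "finite {\<pi>. \<pi> permutes {..<n} \<and> \<pi> ` B = B}"
      using fG unfolding G_def by (rule finite_subset[rotated]) auto
    ultimately have "card {\<pi>. \<pi> permutes {..<n} \<and> \<pi> ` B = B} > 0" by (auto simp only: card_gt_0_iff)
    then show ?thesis unfolding c_def by simp
  qed
  have "(\<Sum>\<pi>\<in>G. F (\<pi> ` B)) / real (card G) = (real c * sum F Sk)/(real c * real (n choose card B))"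
    by (simp only: key cG)
  also have "\<dots> = sum F Sk / real (n choose card B)" using \<open>c \<noteq> 0\<close> by simp
  finally show ?thesis by (simp only: G_def Sk_def)
qed




lemma ustat_perm:
  fixes x :: "nat \<Rightarrow> 'x" and g :: "(nat \<Rightarrow> 'x) \<Rightarrow> real" and n k K :: nat
  assumes sym: "symmetric_kernel A k g" and x: "\<And>i. i < n \<Longrightarrow> x i \<in> A"
  and K: "0 < K" "K * k \<le> n"
  shows "ustat n k g x = (\<Sum>\<pi>\<in>{\<pi>. \<pi> permutes {..<n}}. \<Sum>i<K. g (\<lambda>j\<in>{..<k}. x (\<pi> (i*k+j))))
      / (real (card {\<pi>. \<pi> permutes {..<n}}) * real K)"
proof -
  define G where "G = {\<pi>. \<pi> permutes {..<n}}"
  define rep where "rep S = g (\<lambda>j\<in>{..<k}. x (sorted_list_of_set S ! j))" for S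
  have fG: "finite G" unfolding G_def by (rule finite_permutations) simp
  have Gne: "card G > 0" using fG unfolding G_def by (metis (full_types) card_gt_0_iff empty_iff mem_Collect_eq permutes_id)
  have blk: "(\<Sum>\<pi>\<in>G. g (\<lambda>j\<in>{..<k}. x (\<pi> (i*k+j)))) = real (card G) * ustat n k g x" if i: "i < K" for i
  proof -
    define B where "B = {i*k..<i*k+k}"
    have "i * k + k \<le> K * k" using i by (metis Suc_leI add.commute mult_Suc mult_le_mono1)
    then have Bsub: "B \<subseteq> {..<n}" using K by (auto simp: B_def)
    have cB: "card B = k" by (simp add: B_def)
    have eq: "g (\<lambda>j\<in>{..<k}. x (\<pi> (i*k+j))) = rep (\<pi> ` B)" if p: "\<pi> \<in> G" for \<pi>
    proof -
      have pp: "\<pi> permutes {..<n}" using p by (simp add: G_def)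
      define S where "S = \<pi> ` B"
      have b0: "bij_betw (\<lambda>j. i*k+j) {..<k} B"
        by (rule bij_betw_byWitness[where f'="\<lambda>j. j - i*k"]) (auto simp: B_def)
      have "bij_betw \<pi> B S" unfolding S_def
        by (rule inj_on_imp_bij_betw) (rule inj_on_subset[OF permutes_inj[OF pp] subset_UNIV])
      then have b1: "bij_betw (\<lambda>j. \<pi> (i*k+j)) {..<k} S"
        using bij_betw_trans[OF b0] by (simp add: o_def)
      have Ssub: "S \<subseteq> {..<n}" unfolding S_def using Bsub permutes_image[OF pp] by blast
      have fS: "finite S" by (rule finite_subset[OF Ssub]) simp
      have cS: "card S = k" using b1 bij_betw_same_card by fastforce
      have b2: "bij_betw (\<lambda>j. sorted_list_of_set S ! j) {..<k} S"
        by (rule bij_betw_nth) (use fS cS in auto)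
      have xS: "\<And>l. l \<in> S \<Longrightarrow> x l \<in> A" using Ssub x by blast
      show ?thesis unfolding rep_def S_def[symmetric] by (rule sym_bij[OF sym b1 b2 xS])
    qed
    have "(\<Sum>\<pi>\<in>G. g (\<lambda>j\<in>{..<k}. x (\<pi> (i*k+j)))) = (\<Sum>\<pi>\<in>G. rep (\<pi> ` B))"
      by (rule sum.cong[OF refl eq])
    also have "\<dots> = real (card G) * ((\<Sum>\<pi>\<in>G. rep (\<pi> ` B)) / real (card G))"
      using Gne by simp
    also have "(\<Sum>\<pi>\<in>G. rep (\<pi> ` B)) / real (card G) = ustat n k g x"
      using perm_avg[OF Bsub, of rep] unfolding G_def cB ustat_def rep_def .
    finally show ?thesis .
  qed
  have "(\<Sum>\<pi>\<in>G. \<Sum>i<K. g (\<lambda>j\<in>{..<k}. x (\<pi> (i*k+j)))) = (\<Sum>i<K. \<Sum>\<pi>\<in>G. g (\<lambda>j\<in>{..<k}. x (\<pi> (i*k+j))))"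
    by (rule sum.swap)
  also have "\<dots> = (\<Sum>i<K. real (card G) * ustat n k g x)"
    by (rule sum.cong[OF refl]) (simp add: blk)
  also have "\<dots> = real K * real (card G) * ustat n k g x" by simp
  finally have "(\<Sum>\<pi>\<in>G. \<Sum>i<K. g (\<lambda>j\<in>{..<k}. x (\<pi> (i*k+j)))) = real K * real (card G) * ustat n k g x" .
  then show ?thesis unfolding G_def[symmetric] using Gne K by (simp add: field_simps)
qed




lemma fact_ge_3pow: "2 * 3 ^ n \<le> (fact (n + 2) :: real)"
proof (induction n)
  case 0 then show ?case by simp
next
  case (Suc n)
  have "(fact (Suc n + 2) :: real) = real (n + 3) * fact (n + 2)"
    by (simp add: numeral_3_eq_3 numeral_2_eq_2)
  also have "\<dots> \<ge> 3 * (2 * 3 ^ n)" using Suc by (intro mult_mono) auto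
  finally show ?case by simp
qed

lemma exp_bern:
  fixes l y :: real
  assumes l: "0 \<le> l" "l < 3" and y: "\<bar>y\<bar> \<le> 1"
  shows "exp (l * y) \<le> 1 + l * y + y\<^sup>2 * l\<^sup>2 / (2 * (1 - l / 3))"
proof -
  define f where "f n = inverse (fact (n + 2)) * (l * y) ^ (n + 2)" for n
  define g where "g n = (y\<^sup>2 * l\<^sup>2 / 2) * (l / 3) ^ n" for n
  have e: "exp (l * y) = 1 + l * y + (\<Sum>n. f n)"
    unfolding f_def using exp_first_two_terms[of "l * y"] by simp
  have sf: "summable f"
  proof -
    have "summable (\<lambda>n. inverse (fact n) * (l * y) ^ n)"
      using summable_exp[of "l*y"] by (simp add: field_simps)
    then show ?thesis unfolding f_def by (rule summable_ignore_initial_segment)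
  qed
  have sg: "summable g" unfolding g_def
    by (rule summable_mult) (rule summable_geometric, use l in auto)
  have le: "f n \<le> g n" for n
  proof -
    have "f n = (l*y)^(n+2) / fact (n+2)" by (simp add: f_def divide_inverse mult.commute)
    also have "\<dots> \<le> \<bar>l * y\<bar> ^ (n + 2) / fact (n + 2)"
      by (intro divide_right_mono) (simp_all only: power_abs[symmetric] abs_ge_self fact_ge_zero)
    also have "\<bar>l * y\<bar> ^ (n + 2) = l ^ (n+2) * (\<bar>y\<bar> ^ n * y\<^sup>2)"
      using l by (simp add: abs_mult power_mult_distrib power_add power2_eq_square)
    also have "\<dots> \<le> l ^ (n+2) * y\<^sup>2"
      using y l by (intro mult_left_mono) (auto intro!: mult_left_le_one_le power_le_one)
    also have "l ^ (n+2) * y\<^sup>2 / fact (n + 2) \<le> l ^ (n+2) * y\<^sup>2 / (2 * 3 ^ n)"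
      using l fact_ge_3pow[of n] by (intro divide_left_mono) auto
    also have "\<dots> = g n" unfolding g_def by (simp add: power_add power_divide field_simps power2_eq_square)
    finally show ?thesis by (simp add: divide_right_mono)
  qed
  have "(\<Sum>n. f n) \<le> (\<Sum>n. g n)" by (rule suminf_le[OF le sf sg])
  also have "(\<Sum>n. g n) = (y\<^sup>2 * l\<^sup>2 / 2) * (1 / (1 - l / 3))"
  proof -
    have "g sums ((y\<^sup>2 * l\<^sup>2 / 2) * (1 / (1 - l / 3)))"
      unfolding g_def by (rule sums_mult) (rule geometric_sums, use l in auto)
    then show ?thesis by (rule sums_unique[symmetric])
  qed
  also have "\<dots> = y\<^sup>2 * l\<^sup>2 / (2 * (1 - l / 3))" by simp
  finally show ?thesis using e by simp
qed




lemma chern_arith: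
  fixes V L K :: real
  assumes V: "0 \<le> V" and L: "0 < L" and K: "0 < K"
  shows "\<exists>lam. 0 \<le> lam \<and> lam < 3 \<and>
     K * (V * (lam\<^sup>2 / (2 * (1 - lam / 3))) - lam * (sqrt (2*V*L/K) + 2*L/(3*K))) \<le> -L"
proof -
  define sv where "sv = L / K"
  define r where "r = sqrt (2*V*L/K)"
  define t where "t = r + 2 * sv/3"
  have sv: "0 < sv" using L K by (simp add: sv_def)
  have nn: "0 \<le> 2 * V * L / K" using V L K by simp
  have r0: "0 \<le> r" using nn by (simp add: r_def)
  have r2: "r\<^sup>2 = 2*V * sv" using nn by (simp add: r_def sv_def)
  have t: "t = sqrt (2*V*L/K) + 2*L/(3*K)" by (simp add: t_def r_def sv_def)
  have tpos: "0 < t" using sv r0 by (simp add: t_def)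
  show ?thesis
  proof (cases "V = 0")
    case True
    have "K * (V * ((3/2)\<^sup>2 / (2 * (1 - (3/2) / 3))) - (3/2) * t) = - (3/2) * K * t"
      using True by simp
    also have "\<dots> \<le> - (3/2) * K * (2 * sv/3)" using r0 K by (simp add: t_def)
    also have "\<dots> = -L" using K by (simp add: sv_def)
    finally show ?thesis unfolding t by (intro exI[of _ "3/2"]) simp
  next
    case False
    then have Vp: "0 < V" using V by simp
    define lam where "lam = t / (V + t/3)"
    have d: "0 < V + t/3" using Vp tpos by simp
    have l0: "0 \<le> lam" using tpos d by (simp add: lam_def)
    have l3: "lam < 3" using Vp tpos d by (simp add: lam_def field_simps)
    have one: "1 - lam/3 = V / (V + t/3)" using d by (simp add: lam_def field_simps)
    have psi: "V * (lam\<^sup>2 / (2 * (1 - lam / 3))) = lam * t / 2"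
    proof -
      have a: "lam\<^sup>2 / (2 * (1 - lam / 3)) = lam\<^sup>2 * (V + t/3) / (2*V)"
        unfolding one using d Vp by (simp add: field_simps)
      have c: "lam * (V + t/3) = t" using d unfolding lam_def by simp
      have b: "lam\<^sup>2 * (V + t/3) = lam * t" by (simp add: power2_eq_square mult.assoc c)
      show ?thesis unfolding a b using Vp by simp
    qed
    have "K * (V * (lam\<^sup>2 / (2 * (1 - lam / 3))) - lam * t) = - K * ((t\<^sup>2 / (V + t/3)) / 2)"
    proof -
      have gen: "\<And>x::real. K * (x / 2 - x) = - K * (x / 2)" by simp
      have e: "lam * t = t\<^sup>2 / (V + t/3)" by (simp add: lam_def power2_eq_square)
      have "K * (lam * t / 2 - lam * t) = - K * ((t\<^sup>2 / (V + t/3)) / 2)" unfolding e by (rule gen) 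
      then show ?thesis unfolding psi .
    qed
    also have "\<dots> \<le> - K * sv"
    proof -
      have "t\<^sup>2 = r\<^sup>2 + 4*r * sv/3 + 4 * sv\<^sup>2/9" by (simp add: t_def power2_eq_square field_simps)
      moreover have "2 * sv * (V + t/3) = r\<^sup>2 + 2*r * sv/3 + 4 * sv\<^sup>2/9"
        using r2 by (simp add: t_def power2_eq_square field_simps)
      ultimately have "2 * sv * (V + t/3) \<le> t\<^sup>2" using r0 sv by (simp add: mult_nonneg_nonneg)
      then have "sv * 2 \<le> t\<^sup>2 / (V + t/3)" using d by (simp add: pos_le_divide_eq mult.commute mult.left_commute)
      moreover have "\<And>x::real. sv * 2 \<le> x \<Longrightarrow> sv \<le> x / 2" by simp
      ultimately have "sv \<le> (t\<^sup>2 / (V + t/3)) / 2" by blast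
      then have "K * sv \<le> K * ((t\<^sup>2 / (V + t/3)) / 2)" using K by (intro mult_left_mono) auto
      then show ?thesis by simp
    qed
    also have "\<dots> = -L" using K by (simp add: sv_def)
    finally show ?thesis unfolding t using l0 l3 by blast
  qed
qed




lemma (in prob_space) mgf_single:
  fixes Z :: "'a \<Rightarrow> real"
  assumes rv: "random_variable borel Z" and b: "\<And>\<omega>. \<omega> \<in> space M \<Longrightarrow> \<bar>Z \<omega>\<bar> \<le> 1"
    and mean: "expectation Z = 0" and var: "expectation (\<lambda>\<omega>. (Z \<omega>)\<^sup>2) \<le> V"
    and l: "0 \<le> lam" "lam < 3"
  shows "expectation (\<lambda>\<omega>. exp (lam * Z \<omega>)) \<le> exp (V * (lam\<^sup>2 / (2 * (1 - lam / 3))))"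
proof -
  define psi where "psi = lam\<^sup>2 / (2 * (1 - lam / 3))"
  have psi0: "0 \<le> psi" using l by (simp add: psi_def)
  have intZ: "integrable M Z"
    by (rule integrable_const_bound[where B=1]) (use b rv in auto)
  have intZ2: "integrable M (\<lambda>\<omega>. (Z \<omega>)\<^sup>2)"
    by (rule integrable_const_bound[where B=1]) (use b rv in \<open>auto simp: abs_square_le_1\<close>)
  have intE: "integrable M (\<lambda>\<omega>. exp (lam * Z \<omega>))"
  proof (rule integrable_const_bound[where B="exp lam"])
    show "AE x in M. norm (exp (lam * Z x)) \<le> exp lam"
    proof (rule AE_I2)
      fix x assume "x \<in> space M"
      then have "lam * Z x \<le> lam" using b[of x] l by (metis abs_le_D1 mult_left_le mult.commute)
      then show "norm (exp (lam * Z x)) \<le> exp lam" by simp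
    qed
  qed (use rv in simp)
  have "expectation (\<lambda>\<omega>. exp (lam * Z \<omega>)) \<le> expectation (\<lambda>\<omega>. 1 + lam * Z \<omega> + (Z \<omega>)\<^sup>2 * psi)"
  proof (rule integral_mono)
    show "integrable M (\<lambda>\<omega>. 1 + lam * Z \<omega> + (Z \<omega>)\<^sup>2 * psi)"
      using intZ intZ2 by auto
    fix \<omega> assume "\<omega> \<in> space M"
    then show "exp (lam * Z \<omega>) \<le> 1 + lam * Z \<omega> + (Z \<omega>)\<^sup>2 * psi"
      using exp_bern[OF l b] unfolding psi_def by (simp add: power_mult_distrib mult.commute mult.left_commute)
  qed (fact intE)
  also have "\<dots> = 1 + lam * expectation Z + expectation (\<lambda>\<omega>. (Z \<omega>)\<^sup>2) * psi"
    using intZ intZ2 by (simp add: prob_space)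
  also have "\<dots> \<le> 1 + V * psi" using mean var psi0 by (simp add: mult_right_mono)
  also have "\<dots> \<le> exp (V * psi)" by (rule exp_ge_add_one_self[THEN order.trans[rotated]]) (simp add: add.commute)
  finally show ?thesis unfolding psi_def .
qed

lemma (in prob_space) block_chernoff:
  fixes Y :: "'p \<Rightarrow> nat \<Rightarrow> 'a \<Rightarrow> real" and G :: "'p set" and K :: nat and V L :: real
  assumes G: "finite G" "G \<noteq> {}" and K: "0 < K"
    and ind: "\<And>\<pi>. \<pi> \<in> G \<Longrightarrow> indep_vars (\<lambda>_. borel) (Y \<pi>) {..<K}"
    and bnd: "\<And>\<pi> i \<omega>. \<pi> \<in> G \<Longrightarrow> i < K \<Longrightarrow> \<omega> \<in> space M \<Longrightarrow> \<bar>Y \<pi> i \<omega>\<bar> \<le> 1"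
    and mean: "\<And>\<pi> i. \<pi> \<in> G \<Longrightarrow> i < K \<Longrightarrow> expectation (Y \<pi> i) = 0"
    and var: "\<And>\<pi> i. \<pi> \<in> G \<Longrightarrow> i < K \<Longrightarrow> expectation (\<lambda>\<omega>. (Y \<pi> i \<omega>)\<^sup>2) \<le> V"
    and L: "0 \<le> L"
  shows "prob {\<omega> \<in> space M. sqrt (2 * V * L / K) + 2 * L / (3 * K)
            \<le> (\<Sum>\<pi>\<in>G. \<Sum>i<K. Y \<pi> i \<omega>) / (real (card G) * real K)} \<le> exp (- L)"
proof (cases "L = 0")
  case True
  then show ?thesis by simp
next
  case False
  then have Lp: "0 < L" using L by simp
  have rv: "\<And>\<pi> i. \<pi> \<in> G \<Longrightarrow> i < K \<Longrightarrow> Y \<pi> i \<in> borel_measurable M"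
    using ind unfolding indep_vars_def by auto
  obtain \<pi>0 where p0: "\<pi>0 \<in> G" using G by blast
  have V: "0 \<le> V"
    using var[OF p0 K] by (rule order.trans[rotated]) simp
  define t where "t = sqrt (2 * V * L / K) + 2 * L / (3 * K)"
  obtain lam where l0: "0 \<le> lam" and l3: "lam < 3"
    and lk: "real K * (V * (lam\<^sup>2 / (2 * (1 - lam / 3))) - lam * t) \<le> -L"
    using chern_arith[OF V Lp, of "real K"] K unfolding t_def by auto
  define psi where "psi = lam\<^sup>2 / (2 * (1 - lam / 3))"
  define S where "S \<pi> \<omega> = (\<Sum>i<K. Y \<pi> i \<omega>)" for \<pi> \<omega>
  define T where "T \<omega> = (\<Sum>\<pi>\<in>G. S \<pi> \<omega>) / (real (card G) * real K)" for \<omega>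
  have cG: "0 < card G" using G by (simp add: card_gt_0_iff)
  have Smeas: "\<And>\<pi>. \<pi> \<in> G \<Longrightarrow> S \<pi> \<in> borel_measurable M"
    unfolding S_def using rv by (intro borel_measurable_sum) auto
  have Tmeas: "T \<in> borel_measurable M"
    unfolding T_def using Smeas by (intro borel_measurable_divide borel_measurable_sum) auto
  have Sb: "\<And>\<pi> \<omega>. \<pi> \<in> G \<Longrightarrow> \<omega> \<in> space M \<Longrightarrow> S \<pi> \<omega> \<le> real K"
  proof -
    fix \<pi> \<omega> assume "\<pi> \<in> G" "\<omega> \<in> space M"
    then have "S \<pi> \<omega> \<le> (\<Sum>i<K. 1)" unfolding S_def
      using bnd by (intro sum_mono) (meson abs_le_D1 lessThan_iff)
    then show "S \<pi> \<omega> \<le> real K" by simp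
  qed
  have mgfS: "expectation (\<lambda>\<omega>. exp (lam * S \<pi> \<omega>)) \<le> exp (V * psi) ^ K" if p: "\<pi> \<in> G" for \<pi>
  proof -
    have ind2: "indep_vars (\<lambda>_. borel) (\<lambda>i \<omega>. exp (lam * Y \<pi> i \<omega>)) {..<K}"
      by (rule indep_vars_compose2[OF ind[OF p]]) auto
    have intI: "integrable M (\<lambda>\<omega>. exp (lam * Y \<pi> i \<omega>))" if i: "i \<in> {..<K}" for i
    proof (rule integrable_const_bound[where B="exp lam"])
      show "AE x in M. norm (exp (lam * Y \<pi> i x)) \<le> exp lam"
      proof (rule AE_I2)
        fix x assume "x \<in> space M"
        then have "lam * Y \<pi> i x \<le> lam" using bnd[OF p _ \<open>x \<in> space M\<close>, of i] i l0
          by (metis abs_le_D1 lessThan_iff mult_left_le mult.commute)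
        then show "norm (exp (lam * Y \<pi> i x)) \<le> exp lam" by simp
      qed
    qed (use rv p i in simp)
    have "expectation (\<lambda>\<omega>. exp (lam * S \<pi> \<omega>)) = expectation (\<lambda>\<omega>. \<Prod>i<K. exp (lam * Y \<pi> i \<omega>))"
      unfolding S_def by (simp add: sum_distrib_left exp_sum)
    also have "\<dots> = (\<Prod>i<K. expectation (\<lambda>\<omega>. exp (lam * Y \<pi> i \<omega>)))"
      by (rule indep_vars_lebesgue_integral[OF _ ind2 intI]) auto
    also have "\<dots> \<le> (\<Prod>i<K. exp (V * psi))"
    proof (rule prod_mono)
      fix i assume i: "i \<in> {..<K}"
      have "expectation (\<lambda>\<omega>. exp (lam * Y \<pi> i \<omega>)) \<le> exp (V * psi)"
        unfolding psi_def using i p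
        by (intro mgf_single[OF rv bnd mean var l0 l3]) auto
      moreover have "0 \<le> expectation (\<lambda>\<omega>. exp (lam * Y \<pi> i \<omega>))" by simp
      ultimately show "0 \<le> expectation (\<lambda>\<omega>. exp (lam * Y \<pi> i \<omega>)) \<and> expectation (\<lambda>\<omega>. exp (lam * Y \<pi> i \<omega>)) \<le> exp (V * psi)" by simp
    qed
    finally show ?thesis by simp
  qed
  have jensen: "exp (lam * K * T \<omega>) \<le> (\<Sum>\<pi>\<in>G. (1 / card G) * exp (lam * S \<pi> \<omega>))" for \<omega>
  proof -
    have "lam * K * T \<omega> = (\<Sum>\<pi>\<in>G. (1 / card G) *\<^sub>R (lam * S \<pi> \<omega>))"
      unfolding T_def using K cG by (simp add: sum_distrib_left field_simps)
    then have "exp (lam * K * T \<omega>) = exp (\<Sum>\<pi>\<in>G. (1 / card G) *\<^sub>R (lam * S \<pi> \<omega>))" by simp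
    also have "\<dots> \<le> (\<Sum>\<pi>\<in>G. (1 / card G) * exp (lam * S \<pi> \<omega>))"
      using convex_on_sum[OF G convex_on_exp[of 1], of "\<lambda>_. 1 / card G" "\<lambda>\<pi>. lam * S \<pi> \<omega>"] cG
      by simp
    finally show ?thesis .
  qed
  have intS: "integrable M (\<lambda>\<omega>. exp (lam * S \<pi> \<omega>))" if p: "\<pi> \<in> G" for \<pi>
  proof (rule integrable_const_bound[where B="exp (lam * K)"])
    show "AE x in M. norm (exp (lam * S \<pi> x)) \<le> exp (lam * K)"
    proof (rule AE_I2)
      fix x assume "x \<in> space M"
      then have "lam * S \<pi> x \<le> lam * K" using Sb[OF p] l0 by (simp add: mult_left_mono)
      then show "norm (exp (lam * S \<pi> x)) \<le> exp (lam * K)" by simp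
    qed
  qed (use Smeas p in simp)
  have intT: "integrable M (\<lambda>\<omega>. exp (lam * K * T \<omega>))"
  proof (rule integrable_const_bound[where B="exp (lam * K)"])
    show "AE x in M. norm (exp (lam * K * T x)) \<le> exp (lam * K)"
    proof (rule AE_I2)
      fix x assume x: "x \<in> space M"
      have "(\<Sum>\<pi>\<in>G. S \<pi> x) \<le> (\<Sum>\<pi>\<in>G. real K)" using Sb x by (intro sum_mono) auto
      then have "T x \<le> 1" unfolding T_def using cG K by (simp add: field_simps)
      then have "lam * K * T x \<le> lam * K" using l0 by (simp add: mult_left_le)
      then show "norm (exp (lam * K * T x)) \<le> exp (lam * K)" by simp
    qed
  qed (use Tmeas in simp)
  have ET: "expectation (\<lambda>\<omega>. exp (lam * K * T \<omega>)) \<le> exp (V * psi) ^ K"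
  proof -
    have "expectation (\<lambda>\<omega>. exp (lam * K * T \<omega>)) \<le> expectation (\<lambda>\<omega>. \<Sum>\<pi>\<in>G. (1 / card G) * exp (lam * S \<pi> \<omega>))"
      by (rule integral_mono[OF intT]) (use intS jensen in auto)
    also have "\<dots> = (\<Sum>\<pi>\<in>G. (1 / card G) * expectation (\<lambda>\<omega>. exp (lam * S \<pi> \<omega>)))"
      using intS by (simp add: Bochner_Integration.integral_sum)
    also have "\<dots> \<le> (\<Sum>\<pi>\<in>G. (1 / card G) * exp (V * psi) ^ K)"
      using mgfS by (intro sum_mono mult_left_mono) auto
    also have "\<dots> = exp (V * psi) ^ K" using cG by simp
    finally show ?thesis .
  qed
  have "prob {\<omega> \<in> space M. t \<le> T \<omega>} \<le> prob {\<omega> \<in> space M. exp (lam * K * t) \<le> exp (lam * K * T \<omega>)}"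
  proof (rule finite_measure_mono)
    show "{\<omega> \<in> space M. t \<le> T \<omega>} \<subseteq> {\<omega> \<in> space M. exp (lam * K * t) \<le> exp (lam * K * T \<omega>)}"
      using l0 by (auto intro!: mult_left_mono)
    show "{\<omega> \<in> space M. exp (lam * K * t) \<le> exp (lam * K * T \<omega>)} \<in> events"
      using Tmeas by measurable
  qed
  also have "\<dots> \<le> expectation (\<lambda>\<omega>. exp (lam * K * T \<omega>)) / exp (lam * K * t)"
    by (rule integral_Markov_inequality_measure[OF intT, where A="space M"]) auto
  also have "\<dots> \<le> exp (V * psi) ^ K / exp (lam * K * t)"
    by (rule divide_right_mono[OF ET]) simp
  also have "\<dots> = exp (real K * (V * psi - lam * t))"
    by (simp add: exp_of_nat_mult[symmetric] exp_diff[symmetric] algebra_simps)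
  also have "\<dots> \<le> exp (-L)" using lk unfolding psi_def by simp
  finally show ?thesis unfolding T_def S_def t_def .
qed




lemma (in prob_space) blocks_indep:
  fixes X :: "nat \<Rightarrow> 'a \<Rightarrow> 'b::topological_space" and g :: "nat \<Rightarrow> nat \<Rightarrow> nat"
  assumes indep: "indep_vars (\<lambda>_. borel) X {..<n}"
  and gi: "\<And>i j. i < K \<Longrightarrow> j < k \<Longrightarrow> g i j < n"
  and ginj: "\<And>i j i' j'. i < K \<Longrightarrow> j < k \<Longrightarrow> i' < K \<Longrightarrow> j' < k \<Longrightarrow> g i j = g i' j' \<Longrightarrow> i = i'"
  shows "indep_vars (\<lambda>_. PiM {..<k} (\<lambda>_. borel)) (\<lambda>i \<omega>. \<lambda>j\<in>{..<k}. X (g i j) \<omega>) {..<K}"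
proof -
  define KS where "KS i = g i ` {..<k}" for i
  have sub: "\<And>i. i \<in> {..<K} \<Longrightarrow> KS i \<subseteq> {..<n}" using gi by (auto simp: KS_def)
  have disj: "disjoint_family_on KS {..<K}"
    unfolding disjoint_family_on_def KS_def using ginj by fastforce
  have i1: "indep_vars (\<lambda>i. PiM (KS i) (\<lambda>_. borel)) (\<lambda>i \<omega>. restrict (\<lambda>l. X l \<omega>) (KS i)) {..<K}"
    by (rule indep_vars_restrict[OF indep sub disj])
  have i2: "indep_vars (\<lambda>_. PiM {..<k} (\<lambda>_. borel))
      (\<lambda>i \<omega>. (\<lambda>y. \<lambda>j\<in>{..<k}. y (g i j)) (restrict (\<lambda>l. X l \<omega>) (KS i))) {..<K}"
  proof (rule indep_vars_compose2[OF i1])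
    fix i assume "i \<in> {..<K}"
    show "(\<lambda>y. \<lambda>j\<in>{..<k}. y (g i j)) \<in> measurable (PiM (KS i) (\<lambda>_. borel)) (PiM {..<k} (\<lambda>_. borel))"
      by (rule measurable_restrict) (auto simp: KS_def intro!: measurable_component_singleton)
  qed
  show ?thesis
    by (rule indep_vars_cong[THEN iffD1, OF refl _ refl i2]) (auto simp: KS_def fun_eq_iff)
qed

lemma (in prob_space) block_distr:
  fixes X :: "nat \<Rightarrow> 'a \<Rightarrow> 'b::topological_space" and f :: "nat \<Rightarrow> nat"
  assumes indep: "indep_vars (\<lambda>_. borel) X {..<n}"
  and rv: "\<And>i. i < n \<Longrightarrow> X i \<in> borel_measurable M"
  and ident: "\<And>i. i < n \<Longrightarrow> distr M borel (X i) = distr M borel (X 0)"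
  and fi: "\<And>j. j < k \<Longrightarrow> f j < n" and finj: "inj_on f {..<k}" and k: "0 < k"
  shows "distr M (PiM {..<k} (\<lambda>_. borel)) (\<lambda>\<omega>. \<lambda>j\<in>{..<k}. X (f j) \<omega>) = PiM {..<k} (\<lambda>_. distr M borel (X 0))"
proof -
  have i1: "indep_vars (\<lambda>_. PiM {..<1} (\<lambda>_. borel)) (\<lambda>i \<omega>. \<lambda>j\<in>{..<1::nat}. X ((\<lambda>i j. f i) i j) \<omega>) {..<k}"
    by (rule blocks_indep[OF indep]) (use fi finj in \<open>auto dest: inj_onD\<close>)
  have i2: "indep_vars (\<lambda>_. borel) (\<lambda>i \<omega>. (\<lambda>y. y 0) (\<lambda>j\<in>{..<1::nat}. X ((\<lambda>i j. f i) i j) \<omega>)) {..<k}"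
    by (rule indep_vars_compose2[OF i1]) (auto intro!: measurable_component_singleton)
  have i3: "indep_vars (\<lambda>_. borel) (\<lambda>i \<omega>. X (f i) \<omega>) {..<k}"
    by (rule indep_vars_cong[THEN iffD1, OF refl _ refl i2]) auto
  have "distr M (PiM {..<k} (\<lambda>_. borel)) (\<lambda>\<omega>. \<lambda>j\<in>{..<k}. X (f j) \<omega>)
      = PiM {..<k} (\<lambda>j. distr M borel (X (f j)))"
    using indep_vars_iff_distr_eq_PiM'[where I="{..<k}" and M'="\<lambda>_. borel" and X="\<lambda>j \<omega>. X (f j) \<omega>"] i3 k rv fi by auto
  also have "\<dots> = PiM {..<k} (\<lambda>_. distr M borel (X 0))"
    by (rule PiM_cong) (use ident fi in auto)
  finally show ?thesis .
qed




lemma blk_inj: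
  fixes i j i' j' k :: nat
  assumes "j < k" "j' < k" "i * k + j = i' * k + j'"
  shows "i = i' \<and> j = j'"
proof -
  have k: "0 < k" using assms(1) by simp
  have "(i * k + j) div k = i" using k assms(1) by simp
  moreover have "(i' * k + j') div k = i'" using k assms(2) by simp
  ultimately
  have "i = i'" using assms(3) by metis
  then show ?thesis using assms(3) by simp
qed

lemma blk_lt:
  fixes i j k K n :: nat
  assumes "i < K" "j < k" "K * k \<le> n"
  shows "i * k + j < n"
proof -
  have "i * k + j < i * k + k" using assms by simp
  also have "\<dots> = Suc i * k" by simp
  also have "\<dots> \<le> K * k" using assms by (intro mult_le_mono1) simp
  finally show ?thesis using assms by simp
qed

lemma perm_blk:
  fixes \<pi> :: "nat \<Rightarrow> nat" and i j k K n :: nat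
  assumes p: "\<pi> permutes {..<n}" and "i < K" "j < k" "K * k \<le> n"
  shows "\<pi> (i * k + j) < n"
proof -
  have "i * k + j < n" using blk_lt assms by blast
  then show ?thesis using permutes_in_image[OF p] by simp
qed

lemma perm_blk_inj:
  fixes \<pi> :: "nat \<Rightarrow> nat"
  assumes p: "\<pi> permutes {..<n}" and "j < k" "j' < k" "\<pi> (i * k + j) = \<pi> (i' * k + j')"
  shows "i = i' \<and> j = j'"
proof -
  have "i * k + j = i' * k + j'" using permutes_inj[OF p] assms(4) by (simp add: inj_eq)
  then show ?thesis using blk_inj assms by blast
qed

lemma (in prob_space) integrable_bnd:
  fixes f :: "'a \<Rightarrow> real"
  assumes "f \<in> borel_measurable M" "\<And>\<omega>. \<omega> \<in> space M \<Longrightarrow> \<bar>f \<omega>\<bar> \<le> B"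
  shows "integrable M f"
  by (rule integrable_const_bound[where B=B]) (use assms in auto)




lemma final_arith:
  fixes V W L a b D :: real
  assumes V: "0 \<le> V" and W: "0 \<le> W" and L: "0 < L" and a: "0 < a" and b: "0 < b"
    and h3: "V - W < sqrt (2 * (V/2) * L / b) + 2 * L / (3 * b)"
    and h1: "\<bar>D\<bar> \<le> sqrt (2 * V * L / a) + 2 * L / (3 * a)"
  shows "\<bar>D\<bar> \<le> sqrt (2 * W / a * L) + (sqrt 2 / 2 + sqrt 42 / 6) * sqrt (2 / (a * b)) * L + 4 / (3 * a) * L"
proof -
  define \<sigma> where "\<sigma> = sqrt V"
  define r where "r = sqrt (L / b)"
  define w where "w = sqrt W"
  have s0: "0 \<le> \<sigma>" and r0: "0 \<le> r" and w0: "0 \<le> w" using V W L b by (simp_all add: \<sigma>_def r_def w_def)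
  have s2: "\<sigma>\<^sup>2 = V" using V by (simp add: \<sigma>_def)
  have r2: "r\<^sup>2 = L / b" using L b by (simp add: r_def)
  have w2: "w\<^sup>2 = W" using W by (simp add: w_def)
  have "sqrt (2 * (V/2) * L / b) = \<sigma> * r" by (simp add: \<sigma>_def r_def real_sqrt_mult[symmetric])
  moreover have "2 * L / (3 * b) = 2 * r\<^sup>2 / 3" using r2 by simp
  ultimately have k: "\<sigma>\<^sup>2 - \<sigma> * r - 2 * r\<^sup>2 / 3 < w\<^sup>2" using h3 s2 w2 by linarith
  have sig: "\<sigma> \<le> w + 5 * r / 3"
  proof (rule ccontr)
    assume "\<not> ?thesis"
    then have c1: "w + 5 * r / 3 < \<sigma>" by simp
    then have c2: "w + 2 * r / 3 < \<sigma> - r" by simp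
    have "(w + 5 * r / 3) * (w + 2 * r / 3) < \<sigma> * (\<sigma> - r)"
      by (rule mult_strict_mono[OF c1 c2]) (use c1 w0 r0 in auto)
    moreover have "(w + 5 * r / 3) * (w + 2 * r / 3) = w\<^sup>2 + 7 * w * r / 3 + 10 * r\<^sup>2 / 9"
      by (simp add: power2_eq_square field_simps)
    moreover have "\<sigma> * (\<sigma> - r) = \<sigma>\<^sup>2 - \<sigma> * r" by (simp add: power2_eq_square field_simps)
    moreover have "0 \<le> w * r" using w0 r0 by simp
    moreover have "0 \<le> r\<^sup>2" by simp
    ultimately show False using k by linarith
  qed
  define q where "q = sqrt (2 * L / a)"
  have q0: "0 \<le> q" using L a by (simp add: q_def)
  have "sqrt (2 * V * L / a) = \<sigma> * q" by (simp add: \<sigma>_def q_def real_sqrt_mult[symmetric])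
  also have "\<dots> \<le> (w + 5 * r / 3) * q" by (rule mult_right_mono[OF sig q0])
  also have "\<dots> = w * q + 5 / 3 * (r * q)" by (simp add: algebra_simps)
  also have "w * q = sqrt (2 * W / a * L)" by (simp add: w_def q_def real_sqrt_mult[symmetric])
  also have "r * q = sqrt (2 / (a * b)) * L"
  proof -
    have "r * q = sqrt (L / b * (2 * L / a))" unfolding r_def q_def by (rule real_sqrt_mult[symmetric])
    also have "L / b * (2 * L / a) = 2 / (a * b) * L\<^sup>2" by (simp add: power2_eq_square field_simps)
    also have "sqrt \<dots> = sqrt (2 / (a * b)) * L" using L by (simp only: real_sqrt_mult real_sqrt_abs abs_of_pos)
    finally show ?thesis .
  qed
  finally have A: "sqrt (2 * V * L / a) \<le> sqrt (2 * W / a * L) + 5 / 3 * (sqrt (2 / (a * b)) * L)" .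
  have c: "5 / 3 \<le> sqrt 2 / 2 + sqrt 42 / 6"
  proof -
    have "1.4 \<le> sqrt 2" by (rule real_le_rsqrt) (simp add: power2_eq_square)
    moreover have "6 \<le> sqrt 42" by (rule real_le_rsqrt) simp
    ultimately show ?thesis by simp
  qed
  have p: "0 \<le> sqrt (2 / (a * b)) * L" using L a b by simp
  have B: "5 / 3 * (sqrt (2 / (a * b)) * L) \<le> (sqrt 2 / 2 + sqrt 42 / 6) * sqrt (2 / (a * b)) * L"
    using mult_right_mono[OF c p] by (simp add: mult.assoc)
  have C: "2 * L / (3 * a) \<le> 4 / (3 * a) * L" using L a by (simp add: field_simps)
  show ?thesis using h1 A B C by linarith
qed

lemma rhs_eq:
  fixes m n :: nat and W L :: real
  assumes dv: "(2 * m) dvd n" and m: "0 < m" and n: "0 < n"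
  shows "sqrt (2 * W / real (n div m) * L) + (sqrt 2 / 2 + sqrt 42 / 6) * sqrt (2 / (real (n div m) * real (n div (2 * m)))) * L
           + 4 / (3 * real (n div m)) * L
       = sqrt (2 * real m * W / real n * L) + (4 + sqrt 2 * (3 + sqrt 21)) * real m / (3 * real n) * L"
proof -
  have "m dvd n" using dv by (meson dvd_mult_right)
  then have a: "real (n div m) = real n / real m" by (simp add: real_of_nat_div)
  have b: "real (n div (2 * m)) = real n / (2 * real m)" using dv by (simp add: real_of_nat_div)
  have e1: "2 * W / real (n div m) * L = 2 * real m * W / real n * L" unfolding a using m n by (simp add: field_simps)
  have "2 / (real (n div m) * real (n div (2 * m))) = (2 * real m / real n)\<^sup>2"
    unfolding a b using m n by (simp add: power2_eq_square field_simps)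
  then have e2: "sqrt (2 / (real (n div m) * real (n div (2 * m)))) = 2 * real m / real n" by simp
  have e3: "sqrt 42 = sqrt 2 * sqrt 21" by (simp add: real_sqrt_mult[symmetric])
  have e4: "4 / (3 * real (n div m)) = 4 * real m / (3 * real n)" unfolding a using m n by (simp add: field_simps)
  show ?thesis unfolding e1 e2 e3 e4 using m n by (simp add: field_simps)
qed

theorem mainTheorem8:
  fixes M :: "'a measure" and X :: "nat \<Rightarrow> 'a \<Rightarrow> real ^ 'd"
    and XX :: "(real ^ 'd) set" and h :: "(nat \<Rightarrow> real ^ 'd) \<Rightarrow> real"
    and m n :: nat and \<delta> :: real
  assumes P: "prob_space M"
    and rv: "\<And>i. i < n \<Longrightarrow> X i \<in> borel_measurable M"
    and indep: "prob_space.indep_vars M (\<lambda>_. borel) X {..<n}"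
    and ident: "\<And>i. i < n \<Longrightarrow> distr M borel (X i) = distr M borel (X 0)"
    and range: "\<And>i \<omega>. i < n \<Longrightarrow> \<omega> \<in> space M \<Longrightarrow> X i \<omega> \<in> XX"
    and hmeas: "h \<in> borel_measurable (PiM {..<m} (\<lambda>_. borel))"
    and hbound: "\<And>x. x \<in> PiE {..<m} (\<lambda>_. XX) \<Longrightarrow> h x \<in> {0..1}"
    and hsym: "symmetric_kernel XX m h"
    and etasym: "symmetric_kernel XX (2 * m) (eta m h)"
    and m: "1 \<le> m" and n: "2 * m \<le> n"
    and d: "0 < \<delta>" "\<delta> < 1"
  shows
    "(let \<theta> = (\<integral>x. h x \<partial>(PiM {..<m} (\<lambda>_. distr M borel (X 0))));
          U = (\<lambda>\<omega>. ustat n m h (\<lambda>i. X i \<omega>));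
          W = (\<lambda>\<omega>. ustat n (2 * m) (eta m h) (\<lambda>i. X i \<omega>));
          a = real (n div m); b = real (n div (2 * m)); L = ln (3 / \<delta>)
      in measure M {\<omega> \<in> space M. \<bar>U \<omega> - \<theta>\<bar> \<le>
             sqrt (2 * W \<omega> / a * L)
             + (sqrt 2 / 2 + sqrt 42 / 6) * sqrt (2 / (a * b)) * L
             + 4 / (3 * a) * L} \<ge> 1 - \<delta>
       \<and> ((2 * m) dvd n \<longrightarrow>
           measure M {\<omega> \<in> space M. \<bar>U \<omega> - \<theta>\<bar> \<le>
             sqrt (2 * real m * W \<omega> / real n * L)
             + (4 + sqrt 2 * (3 + sqrt 21)) * real m / (3 * real n) * L} \<ge> 1 - \<delta>))"
proof -
  interpret prob_space M by (rule P)
  define \<mu> where "\<mu> = distr M borel (X 0)"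
  define \<nu> where "\<nu> = PiM {..<m} (\<lambda>_. \<mu>)"
  define \<theta> where "\<theta> = (\<integral>x. h x \<partial>\<nu>)"
  define V where "V = (\<integral>x. (h x - \<theta>)\<^sup>2 \<partial>\<nu>)"
  define Zv where "Zv f \<omega> = (\<lambda>j\<in>{..<m}. X (f j) \<omega>)" for f :: "nat \<Rightarrow> nat" and \<omega>
  have m0: "0 < m" using m by simp
  have Zmeas: "Zv f \<in> measurable M (PiM {..<m} (\<lambda>_. borel))" if "\<And>j. j < m \<Longrightarrow> f j < n" for f
    unfolding Zv_def by (rule measurable_restrict) (use rv that in auto)
  have Zrange: "Zv f \<omega> \<in> PiE {..<m} (\<lambda>_. XX)" if "\<And>j. j < m \<Longrightarrow> f j < n" "\<omega> \<in> space M" for f \<omega>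
    using range that by (auto simp: Zv_def restrict_PiE_iff)
  have hZ: "0 \<le> h (Zv f \<omega>) \<and> h (Zv f \<omega>) \<le> 1" if "\<And>j. j < m \<Longrightarrow> f j < n" "\<omega> \<in> space M" for f \<omega>
    using hbound[OF Zrange[of f \<omega>, OF that]] by simp
  have hZm: "(\<lambda>\<omega>. h (Zv f \<omega>)) \<in> borel_measurable M" if "\<And>j. j < m \<Longrightarrow> f j < n" for f
    using measurable_comp[OF Zmeas[of f, OF that] hmeas] by (simp add: o_def)
  have Zdistr: "distr M (PiM {..<m} (\<lambda>_. borel)) (Zv f) = \<nu>"
    if "\<And>j. j < m \<Longrightarrow> f j < n" "inj_on f {..<m}" for f
    unfolding Zv_def \<nu>_def \<mu>_def by (rule block_distr[OF indep rv ident]) (use that m0 in auto)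
  have EF: "expectation (\<lambda>\<omega>. F (Zv f \<omega>)) = (\<integral>x. F x \<partial>\<nu>)"
    if "\<And>j. j < m \<Longrightarrow> f j < n" "inj_on f {..<m}" "F \<in> borel_measurable (PiM {..<m} (\<lambda>_. borel))"
    for f and F :: "_ \<Rightarrow> real"
    using integral_distr[OF Zmeas[of f, OF that(1)] that(3)] Zdistr[of f, OF that(1,2)] by simp
  have Eh: "expectation (\<lambda>\<omega>. h (Zv f \<omega>)) = \<theta>"
    if "\<And>j. j < m \<Longrightarrow> f j < n" "inj_on f {..<m}" for f
    unfolding \<theta>_def by (rule EF[of f, OF that hmeas])
  have EV: "expectation (\<lambda>\<omega>. (h (Zv f \<omega>) - \<theta>)\<^sup>2) = V"
    if "\<And>j. j < m \<Longrightarrow> f j < n" "inj_on f {..<m}" for f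
    unfolding V_def by (rule EF[of f, OF that]) (use hmeas in measurable)
  have idf: "\<And>j. j < m \<Longrightarrow> id j < n" "inj_on id {..<m}" using n by auto
  have th: "0 \<le> \<theta>" "\<theta> \<le> 1"
  proof -
    have "0 \<le> expectation (\<lambda>\<omega>. h (Zv id \<omega>))"
      by (rule integral_nonneg_AE) (use hZ[of id, OF idf(1)] in auto)
    then show "0 \<le> \<theta>" using Eh[of id, OF idf] by simp
    have "expectation (\<lambda>\<omega>. h (Zv id \<omega>)) \<le> expectation (\<lambda>\<omega>. 1)"
      by (rule integral_mono) (use hZ[of id, OF idf(1)] hZm[of id, OF idf(1)] in \<open>auto intro!: integrable_bnd[where B=1]\<close>)
    then show "\<theta> \<le> 1" using Eh[of id, OF idf] by (simp add: prob_space)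
  qed
  have hZt: "\<bar>h (Zv f \<omega>) - \<theta>\<bar> \<le> 1" if "\<And>j. j < m \<Longrightarrow> f j < n" "\<omega> \<in> space M" for f \<omega>
    using hZ[of f \<omega>, OF that] th by auto
  have hZi: "integrable M (\<lambda>\<omega>. h (Zv f \<omega>))" if "\<And>j. j < m \<Longrightarrow> f j < n" for f
    by (rule integrable_bnd[where B=1]) (use hZm[of f, OF that] hZ[of f, OF that] in auto)
  have Vb: "0 \<le> V" "V \<le> 1"
  proof -
    have "0 \<le> expectation (\<lambda>\<omega>. (h (Zv id \<omega>) - \<theta>)\<^sup>2)" by simp
    then show "0 \<le> V" using EV[of id, OF idf] by simp
    have "expectation (\<lambda>\<omega>. (h (Zv id \<omega>) - \<theta>)\<^sup>2) \<le> expectation (\<lambda>\<omega>. 1)"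
    proof (rule integral_mono)
      show "integrable M (\<lambda>\<omega>. (h (Zv id \<omega>) - \<theta>)\<^sup>2)"
        by (rule integrable_bnd[where B=1]) (use hZm[of id, OF idf(1)] hZt[of id, OF idf(1)] in \<open>auto simp: abs_square_le_1\<close>)
      fix \<omega> assume "\<omega> \<in> space M"
      then show "(h (Zv id \<omega>) - \<theta>)\<^sup>2 \<le> 1" using hZt[of id, OF idf(1)] by (simp add: abs_square_le_1)
    qed simp
    then show "V \<le> 1" using EV[of id, OF idf] by (simp add: prob_space)
  qed
  define G where "G = {\<pi>::nat\<Rightarrow>nat. \<pi> permutes {..<n}}"
  have fG: "finite G" unfolding G_def by (rule finite_permutations) simp
  have Gne: "G \<noteq> {}" unfolding G_def using permutes_id by blast
  define Ka where "Ka = n div m"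
  define Kb where "Kb = n div (2 * m)"
  have Ka: "0 < Ka" "Ka * m \<le> n" using m n by (auto simp: Ka_def div_greater_zero_iff div_times_less_eq_dividend)
  have Kb: "0 < Kb" "Kb * (2 * m) \<le> n" using m n by (auto simp: Kb_def div_greater_zero_iff div_times_less_eq_dividend)
  define Ub where "Ub \<omega> = (\<Sum>\<pi>\<in>G. \<Sum>i<Ka. h (\<lambda>j\<in>{..<m}. X (\<pi> (i*m+j)) \<omega>)) / (real (card G) * real Ka)" for \<omega>
  define Wb where "Wb \<omega> = (\<Sum>\<pi>\<in>G. \<Sum>i<Kb. eta m h (\<lambda>j\<in>{..<2*m}. X (\<pi> (i*(2*m)+j)) \<omega>)) / (real (card G) * real Kb)" for \<omega>
  have Ueq: "ustat n m h (\<lambda>i. X i \<omega>) = Ub \<omega>" if "\<omega> \<in> space M" for \<omega>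
    unfolding Ub_def G_def by (rule ustat_perm[OF hsym]) (use range that Ka in auto)
  have Weq: "ustat n (2*m) (eta m h) (\<lambda>i. X i \<omega>) = Wb \<omega>" if "\<omega> \<in> space M" for \<omega>
    unfolding Wb_def G_def by (rule ustat_perm[OF etasym]) (use range that Kb in auto)
  have etaZ: "eta m h (\<lambda>j\<in>{..<2*m}. X (g j) \<omega>) = (h (Zv g \<omega>) - h (Zv (\<lambda>j. g (m+j)) \<omega>))\<^sup>2 / 2" for g \<omega>
  proof -
    have e1: "(\<lambda>j\<in>{..<m}. (\<lambda>j\<in>{..<2*m}. X (g j) \<omega>) j) = Zv g \<omega>"
      unfolding Zv_def by (rule restrict_ext) simp
    have e2: "(\<lambda>j\<in>{..<m}. (\<lambda>j\<in>{..<2*m}. X (g j) \<omega>) (m + j)) = Zv (\<lambda>j. g (m+j)) \<omega>"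
      unfolding Zv_def by (rule restrict_ext) simp
    show ?thesis unfolding eta_def e1 e2 by simp
  qed
  have etameas: "eta m h \<in> borel_measurable (PiM {..<2*m} (\<lambda>_. borel))"
  proof -
    have r1: "(\<lambda>x. \<lambda>j\<in>{..<m}. x j) \<in> measurable (PiM {..<2*m} (\<lambda>_. borel)) (PiM {..<m} (\<lambda>_. (borel :: (real^'d) measure)))"
      by (rule measurable_restrict) (auto intro!: measurable_component_singleton)
    have r2: "(\<lambda>x. \<lambda>j\<in>{..<m}. x (m+j)) \<in> measurable (PiM {..<2*m} (\<lambda>_. borel)) (PiM {..<m} (\<lambda>_. (borel :: (real^'d) measure)))"
      by (rule measurable_restrict) (auto intro!: measurable_component_singleton)
    have [measurable]: "(\<lambda>x. h (\<lambda>j\<in>{..<m}. x j)) \<in> borel_measurable (PiM {..<2*m} (\<lambda>_. borel))"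
      using measurable_comp[OF r1 hmeas] by (simp add: o_def)
    have [measurable]: "(\<lambda>x. h (\<lambda>j\<in>{..<m}. x (m+j))) \<in> borel_measurable (PiM {..<2*m} (\<lambda>_. borel))"
      using measurable_comp[OF r2 hmeas] by (simp add: o_def)
    show ?thesis unfolding eta_def by measurable
  qed
  have Eeta: "expectation (\<lambda>\<omega>. eta m h (\<lambda>j\<in>{..<2*m}. X (g j) \<omega>)) = V"
    if g1: "\<And>j. j < 2*m \<Longrightarrow> g j < n" and g2: "inj_on g {..<2*m}" for g
  proof -
    define F where "F l \<omega> = h (\<lambda>j\<in>{..<m}. X (g (l*m+j)) \<omega>) - \<theta>" for l \<omega>
    have f1: "\<And>j. j < m \<Longrightarrow> g j < n" "inj_on g {..<m}" using g1 g2 by (auto intro: inj_on_subset)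
    have f2: "\<And>j. j < m \<Longrightarrow> g (m+j) < n" "inj_on (\<lambda>j. g (m+j)) {..<m}"
    proof -
      show "\<And>j. j < m \<Longrightarrow> g (m+j) < n" using g1 by simp
      show "inj_on (\<lambda>j. g (m+j)) {..<m}"
      proof (rule inj_onI)
        fix x y assume "x \<in> {..<m}" "y \<in> {..<m}" "g (m+x) = g (m+y)"
        then have "m + x = m + y" using g2 by (auto dest: inj_onD)
        then show "x = y" by simp
      qed
    qed
    have F0: "F 0 = (\<lambda>\<omega>. h (Zv g \<omega>) - \<theta>)" by (simp add: F_def Zv_def fun_eq_iff)
    have F1: "F 1 = (\<lambda>\<omega>. h (Zv (\<lambda>j. g (m+j)) \<omega>) - \<theta>)" by (simp add: F_def Zv_def fun_eq_iff)
    have Fm: "F l \<in> borel_measurable M" if "l < 2" for l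
    proof -
      have "\<And>j. j < m \<Longrightarrow> g (l*m+j) < n" using g1 blk_lt[of l 2 _ m "2*m"] that by (simp add: mult.commute)
      then show ?thesis unfolding F_def using hZm[of "\<lambda>j. g (l*m+j)"] unfolding Zv_def by simp
    qed
    have Fb: "\<bar>F l \<omega>\<bar> \<le> 1" if "l < 2" "\<omega> \<in> space M" for l \<omega>
    proof -
      have "\<And>j. j < m \<Longrightarrow> g (l*m+j) < n" using g1 blk_lt[of l 2 _ m "2*m"] that by (simp add: mult.commute)
      then show ?thesis unfolding F_def using hZt[of "\<lambda>j. g (l*m+j)" \<omega>] that unfolding Zv_def by simp
    qed
    have Fint: "integrable M (F l)" if "l < 2" for l
      by (rule integrable_bnd[where B=1]) (use Fm Fb that in auto)
    have ind1: "indep_vars (\<lambda>_. PiM {..<m} (\<lambda>_. borel)) (\<lambda>l \<omega>. \<lambda>j\<in>{..<m}. X (g (l*m+j)) \<omega>) {..<2}"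
    proof (rule blocks_indep[OF indep])
      fix l j :: nat assume "l < 2" "j < m"
      then show "g (l*m+j) < n" using g1 blk_lt[of l 2 j m "2*m"] by (simp add: mult.commute)
    next
      fix l j l' j' :: nat assume a: "l < 2" "j < m" "l' < 2" "j' < m" "g (l*m+j) = g (l'*m+j')"
      have "l*m+j < 2*m" "l'*m+j' < 2*m" using a blk_lt[of _ 2 _ m "2*m"] by (auto simp: mult.commute)
      then have "l*m+j = l'*m+j'" using g2 a(5) by (auto dest: inj_onD)
      then show "l = l'" using blk_inj a by blast
    qed
    have ind2: "indep_vars (\<lambda>_. borel) F {..<2}"
      unfolding F_def by (rule indep_vars_compose2[OF ind1]) (use hmeas in measurable)
    have "expectation (\<lambda>\<omega>. \<Prod>l\<in>{..<2::nat}. F l \<omega>) = (\<Prod>l\<in>{..<2::nat}. expectation (F l))"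
      by (rule indep_vars_lebesgue_integral[OF _ ind2]) (use Fint in auto)
    moreover have "\<And>\<omega>. (\<Prod>l\<in>{..<2::nat}. F l \<omega>) = F 0 \<omega> * F 1 \<omega>"
      by (simp add: numeral_2_eq_2 lessThan_Suc)
    moreover have "(\<Prod>l\<in>{..<2::nat}. expectation (F l)) = expectation (F 0) * expectation (F 1)"
      by (simp add: numeral_2_eq_2 lessThan_Suc)
    ultimately have EAB: "expectation (\<lambda>\<omega>. F 0 \<omega> * F 1 \<omega>) = expectation (F 0) * expectation (F 1)" by simp
    have EA: "expectation (F 0) = 0" unfolding F0
      using Eh[of g, OF f1] hZi[of g, OF f1(1)] by (simp add: prob_space)
    have EB: "expectation (F 1) = 0" unfolding F1
      using Eh[of "\<lambda>j. g (m+j)", OF f2] hZi[of "\<lambda>j. g (m+j)", OF f2(1)] by (simp add: prob_space)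
    have EA2: "expectation (\<lambda>\<omega>. (F 0 \<omega>)\<^sup>2) = V" unfolding F0 using EV[of g, OF f1] by simp
    have EB2: "expectation (\<lambda>\<omega>. (F 1 \<omega>)\<^sup>2) = V" unfolding F1 using EV[of "\<lambda>j. g (m+j)", OF f2] by simp
    have int2: "integrable M (\<lambda>\<omega>. (F l \<omega>)\<^sup>2)" if "l < 2" for l
      by (rule integrable_bnd[where B=1]) (use Fm Fb that in \<open>auto simp: abs_square_le_1\<close>)
    have intAB: "integrable M (\<lambda>\<omega>. F 0 \<omega> * F 1 \<omega>)"
      by (rule integrable_bnd[where B=1]) (use Fm Fb in \<open>auto simp: abs_mult intro!: mult_le_one\<close>)
    have "\<And>\<omega>. eta m h (\<lambda>j\<in>{..<2*m}. X (g j) \<omega>) = ((F 0 \<omega>)\<^sup>2 + (F 1 \<omega>)\<^sup>2) / 2 - F 0 \<omega> * F 1 \<omega>"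
    proof -
      have alg: "\<And>a b::real. (a - b)\<^sup>2 / 2 = ((a - \<theta>)\<^sup>2 + (b - \<theta>)\<^sup>2) / 2 - (a - \<theta>) * (b - \<theta>)"
        by (simp add: power2_eq_square field_simps)
      show "\<And>\<omega>. eta m h (\<lambda>j\<in>{..<2*m}. X (g j) \<omega>) = ((F 0 \<omega>)\<^sup>2 + (F 1 \<omega>)\<^sup>2) / 2 - F 0 \<omega> * F 1 \<omega>"
        unfolding etaZ F0 F1 by (rule alg)
    qed
    then have "expectation (\<lambda>\<omega>. eta m h (\<lambda>j\<in>{..<2*m}. X (g j) \<omega>))
       = expectation (\<lambda>\<omega>. ((F 0 \<omega>)\<^sup>2 + (F 1 \<omega>)\<^sup>2) / 2 - F 0 \<omega> * F 1 \<omega>)" by simp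
    also have "\<dots> = (expectation (\<lambda>\<omega>. (F 0 \<omega>)\<^sup>2) + expectation (\<lambda>\<omega>. (F 1 \<omega>)\<^sup>2)) / 2 - expectation (\<lambda>\<omega>. F 0 \<omega> * F 1 \<omega>)"
      using int2[of 0] int2[of 1] intAB by simp
    also have "\<dots> = V" unfolding EA2 EB2 EAB EA EB by simp
    finally show ?thesis .
  qed
  define L where "L = ln (3 / \<delta>)"
  have Lp: "0 < L" unfolding L_def using d by simp
  have eL: "exp (- L) = \<delta> / 3"
  proof -
    have "exp L = 3 / \<delta>" unfolding L_def using d by (intro exp_ln) simp
    then show ?thesis unfolding exp_minus by simp
  qed
  have cG: "0 < card G" using fG Gne by (simp add: card_gt_0_iff)
  have Gp: "\<pi> permutes {..<n}" if "\<pi> \<in> G" for \<pi> using that by (simp add: G_def)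
  have ublk: "\<And>j. j < m \<Longrightarrow> \<pi> (i*m+j) < n" "inj_on (\<lambda>j. \<pi> (i*m+j)) {..<m}"
    if "\<pi> \<in> G" "i < Ka" for \<pi> i
  proof -
    show "\<And>j. j < m \<Longrightarrow> \<pi> (i*m+j) < n" using perm_blk[OF Gp[OF that(1)] that(2) _ Ka(2)] by blast
    show "inj_on (\<lambda>j. \<pi> (i*m+j)) {..<m}"
      by (rule inj_onI) (use perm_blk_inj[OF Gp[OF that(1)]] in blast)
  qed
  have wblk: "\<And>j. j < 2*m \<Longrightarrow> \<pi> (i*(2*m)+j) < n" "inj_on (\<lambda>j. \<pi> (i*(2*m)+j)) {..<2*m}"
    if "\<pi> \<in> G" "i < Kb" for \<pi> i
  proof -
    show "\<And>j. j < 2*m \<Longrightarrow> \<pi> (i*(2*m)+j) < n" using perm_blk[OF Gp[OF that(1)] that(2) _ Kb(2)] by blast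
    show "inj_on (\<lambda>j. \<pi> (i*(2*m)+j)) {..<2*m}"
      by (rule inj_onI) (use perm_blk_inj[OF Gp[OF that(1)]] in blast)
  qed
  define Y1 where "Y1 = (\<lambda>\<pi> i \<omega>. h (Zv (\<lambda>j. \<pi> (i*m+j)) \<omega>) - \<theta>)"
  define Y2 where "Y2 = (\<lambda>\<pi> i \<omega>. \<theta> - h (Zv (\<lambda>j. \<pi> (i*m+j)) \<omega>))"
  define Y3 where "Y3 = (\<lambda>\<pi> i \<omega>. V - eta m h (\<lambda>j\<in>{..<2*m}. X (\<pi> (i*(2*m)+j)) \<omega>))"
  have indU: "indep_vars (\<lambda>_. PiM {..<m} (\<lambda>_. borel)) (\<lambda>i \<omega>. \<lambda>j\<in>{..<m}. X (\<pi> (i*m+j)) \<omega>) {..<Ka}"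
    if p: "\<pi> \<in> G" for \<pi>
  proof (rule blocks_indep[OF indep])
    fix i j :: nat assume "i < Ka" "j < m"
    then show "\<pi> (i*m+j) < n" using ublk[OF p] by blast
  next
    fix i j i' j' :: nat assume "i < Ka" "j < m" "i' < Ka" "j' < m" "\<pi> (i*m+j) = \<pi> (i'*m+j')"
    then show "i = i'" using perm_blk_inj[OF Gp[OF p]] by blast
  qed
  have indW: "indep_vars (\<lambda>_. PiM {..<2*m} (\<lambda>_. borel)) (\<lambda>i \<omega>. \<lambda>j\<in>{..<2*m}. X (\<pi> (i*(2*m)+j)) \<omega>) {..<Kb}"
    if p: "\<pi> \<in> G" for \<pi>
  proof (rule blocks_indep[OF indep])
    fix i j :: nat assume "i < Kb" "j < 2*m"
    then show "\<pi> (i*(2*m)+j) < n" using wblk[OF p] by blast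
  next
    fix i j i' j' :: nat assume "i < Kb" "j < 2*m" "i' < Kb" "j' < 2*m" "\<pi> (i*(2*m)+j) = \<pi> (i'*(2*m)+j')"
    then show "i = i'" using perm_blk_inj[OF Gp[OF p]] by blast
  qed
  have C1: "prob {\<omega> \<in> space M. sqrt (2 * V * L / Ka) + 2 * L / (3 * Ka)
            \<le> (\<Sum>\<pi>\<in>G. \<Sum>i<Ka. Y1 \<pi> i \<omega>) / (real (card G) * real Ka)} \<le> exp (- L)"
  proof (rule block_chernoff[OF fG Gne Ka(1)])
    fix \<pi> assume p: "\<pi> \<in> G"
    show "indep_vars (\<lambda>_. borel) (Y1 \<pi>) {..<Ka}"
      unfolding Y1_def Zv_def by (rule indep_vars_compose2[OF indU[OF p]]) (use hmeas in measurable)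
    fix i assume i: "i < Ka"
    show "\<And>\<omega>. \<omega> \<in> space M \<Longrightarrow> \<bar>Y1 \<pi> i \<omega>\<bar> \<le> 1"
      unfolding Y1_def using hZt[of "\<lambda>j. \<pi> (i*m+j)", OF ublk(1)[OF p i]] by blast
    show "expectation (Y1 \<pi> i) = 0"
      unfolding Y1_def using Eh[of "\<lambda>j. \<pi> (i*m+j)", OF ublk[OF p i]] hZi[of "\<lambda>j. \<pi> (i*m+j)", OF ublk(1)[OF p i]]
      by (simp add: prob_space)
    show "expectation (\<lambda>\<omega>. (Y1 \<pi> i \<omega>)\<^sup>2) \<le> V"
      unfolding Y1_def using EV[of "\<lambda>j. \<pi> (i*m+j)", OF ublk[OF p i]] by simp
  qed (use Lp in simp)
  have C2: "prob {\<omega> \<in> space M. sqrt (2 * V * L / Ka) + 2 * L / (3 * Ka)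
            \<le> (\<Sum>\<pi>\<in>G. \<Sum>i<Ka. Y2 \<pi> i \<omega>) / (real (card G) * real Ka)} \<le> exp (- L)"
  proof (rule block_chernoff[OF fG Gne Ka(1)])
    fix \<pi> assume p: "\<pi> \<in> G"
    show "indep_vars (\<lambda>_. borel) (Y2 \<pi>) {..<Ka}"
      unfolding Y2_def Zv_def by (rule indep_vars_compose2[OF indU[OF p]]) (use hmeas in measurable)
    fix i assume i: "i < Ka"
    show "\<And>\<omega>. \<omega> \<in> space M \<Longrightarrow> \<bar>Y2 \<pi> i \<omega>\<bar> \<le> 1"
      unfolding Y2_def using hZt[of "\<lambda>j. \<pi> (i*m+j)", OF ublk(1)[OF p i]] by (simp add: abs_minus_commute)
    show "expectation (Y2 \<pi> i) = 0"
      unfolding Y2_def using Eh[of "\<lambda>j. \<pi> (i*m+j)", OF ublk[OF p i]] hZi[of "\<lambda>j. \<pi> (i*m+j)", OF ublk(1)[OF p i]]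
      by (simp add: prob_space)
    have "\<And>\<omega>. (\<theta> - h (Zv (\<lambda>j. \<pi> (i*m+j)) \<omega>))\<^sup>2 = (h (Zv (\<lambda>j. \<pi> (i*m+j)) \<omega>) - \<theta>)\<^sup>2"
      by (simp add: power2_commute)
    then show "expectation (\<lambda>\<omega>. (Y2 \<pi> i \<omega>)\<^sup>2) \<le> V"
      unfolding Y2_def using EV[of "\<lambda>j. \<pi> (i*m+j)", OF ublk[OF p i]] by simp
  qed (use Lp in simp)
  have etaM: "(\<lambda>\<omega>. eta m h (\<lambda>j\<in>{..<2*m}. X (g j) \<omega>)) \<in> borel_measurable M"
    if g1: "\<And>j. j < 2*m \<Longrightarrow> g j < n" for g
  proof -
    have "(\<lambda>\<omega>. \<lambda>j\<in>{..<2*m}. X (g j) \<omega>) \<in> measurable M (PiM {..<2*m} (\<lambda>_. borel))"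
      by (rule measurable_restrict) (use rv g1 in auto)
    from measurable_comp[OF this etameas] show ?thesis by (simp add: o_def)
  qed
  have etab: "0 \<le> eta m h (\<lambda>j\<in>{..<2*m}. X (g j) \<omega>) \<and> eta m h (\<lambda>j\<in>{..<2*m}. X (g j) \<omega>) \<le> 1/2"
    if g1: "\<And>j. j < 2*m \<Longrightarrow> g j < n" and w: "\<omega> \<in> space M" for g \<omega>
  proof -
    have a: "0 \<le> h (Zv g \<omega>) \<and> h (Zv g \<omega>) \<le> 1" using hZ[of g \<omega>] g1 w by simp
    have b: "0 \<le> h (Zv (\<lambda>j. g (m+j)) \<omega>) \<and> h (Zv (\<lambda>j. g (m+j)) \<omega>) \<le> 1" using hZ[of "\<lambda>j. g (m+j)" \<omega>] g1 w by simp
    have "\<bar>h (Zv g \<omega>) - h (Zv (\<lambda>j. g (m+j)) \<omega>)\<bar> \<le> 1" using a b by linarith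
    then have "(h (Zv g \<omega>) - h (Zv (\<lambda>j. g (m+j)) \<omega>))\<^sup>2 \<le> 1" by (simp add: abs_square_le_1)
    then show ?thesis unfolding etaZ by simp
  qed
  have C3: "prob {\<omega> \<in> space M. sqrt (2 * (V/2) * L / Kb) + 2 * L / (3 * Kb)
            \<le> (\<Sum>\<pi>\<in>G. \<Sum>i<Kb. Y3 \<pi> i \<omega>) / (real (card G) * real Kb)} \<le> exp (- L)"
  proof (rule block_chernoff[OF fG Gne Kb(1)])
    fix \<pi> assume p: "\<pi> \<in> G"
    show "indep_vars (\<lambda>_. borel) (Y3 \<pi>) {..<Kb}"
      unfolding Y3_def by (rule indep_vars_compose2[OF indW[OF p]]) (use etameas in measurable)
    fix i assume i: "i < Kb"
    note g = wblk[OF p i]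
    define E where "E \<omega> = eta m h (\<lambda>j\<in>{..<2*m}. X (\<pi> (i*(2*m)+j)) \<omega>)" for \<omega>
    have Em: "E \<in> borel_measurable M" unfolding E_def using etaM[OF g(1)] by simp
    have Eb: "0 \<le> E \<omega> \<and> E \<omega> \<le> 1/2" if "\<omega> \<in> space M" for \<omega>
      unfolding E_def using etab[OF g(1) that] by simp
    have Ei: "integrable M E"
    proof (rule integrable_bnd[where B=1])
      fix \<omega> assume "\<omega> \<in> space M"
      then have "0 \<le> E \<omega>" "E \<omega> \<le> 1/2" using Eb[OF \<open>\<omega> \<in> space M\<close>] by auto
      then show "\<bar>E \<omega>\<bar> \<le> 1" by simp
    qed (fact Em)
    have Ei2: "integrable M (\<lambda>\<omega>. (E \<omega>)\<^sup>2)"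
    proof (rule integrable_bnd[where B=1])
      fix \<omega> assume "\<omega> \<in> space M"
      then have "0 \<le> E \<omega>" "E \<omega> \<le> 1" using Eb[OF \<open>\<omega> \<in> space M\<close>] by auto
      then show "\<bar>(E \<omega>)\<^sup>2\<bar> \<le> 1" by (simp add: abs_square_le_1)
    qed (use Em in simp)
    have EE: "expectation E = V" unfolding E_def by (rule Eeta[OF g])
    show "\<bar>Y3 \<pi> i \<omega>\<bar> \<le> 1" if w: "\<omega> \<in> space M" for \<omega>
    proof -
      have "0 \<le> E \<omega>" "E \<omega> \<le> 1/2" using Eb[OF w] by auto
      then show ?thesis unfolding Y3_def E_def[symmetric] using Vb by (simp add: abs_le_iff)
    qed
    show "expectation (Y3 \<pi> i) = 0"
      unfolding Y3_def E_def[symmetric] using Ei EE by (simp add: prob_space)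
    have "expectation (\<lambda>\<omega>. (Y3 \<pi> i \<omega>)\<^sup>2) = expectation (\<lambda>\<omega>. V\<^sup>2 - 2 * V * E \<omega> + (E \<omega>)\<^sup>2)"
      unfolding Y3_def E_def[symmetric] by (rule arg_cong[where f="integral\<^sup>L M"]) (simp add: power2_diff fun_eq_iff)
    also have "\<dots> = V\<^sup>2 - 2 * V * expectation E + expectation (\<lambda>\<omega>. (E \<omega>)\<^sup>2)"
      using Ei Ei2 by (simp add: prob_space)
    also have "expectation (\<lambda>\<omega>. (E \<omega>)\<^sup>2) \<le> expectation (\<lambda>\<omega>. E \<omega> / 2)"
    proof (rule integral_mono[OF Ei2])
      show "integrable M (\<lambda>\<omega>. E \<omega> / 2)" using Ei by simp
      fix \<omega> assume "\<omega> \<in> space M"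
      then have "0 \<le> E \<omega>" "E \<omega> \<le> 1/2" using Eb[OF \<open>\<omega> \<in> space M\<close>] by auto
      then show "(E \<omega>)\<^sup>2 \<le> E \<omega> / 2" by (simp add: power2_eq_square mult_left_mono[of "E \<omega>" "1/2" "E \<omega>", simplified])
    qed
    also have "expectation (\<lambda>\<omega>. E \<omega> / 2) = V / 2" using EE by simp
    finally have f: "expectation (\<lambda>\<omega>. (Y3 \<pi> i \<omega>)\<^sup>2) \<le> V\<^sup>2 - 2 * V * expectation E + V / 2" by simp
    have "V\<^sup>2 = V * V" by (simp add: power2_eq_square)
    moreover have "0 \<le> V * V" by simp
    ultimately show "expectation (\<lambda>\<omega>. (Y3 \<pi> i \<omega>)\<^sup>2) \<le> V / 2" using f unfolding EE by linarith
  qed (use Lp in simp)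
  have UbM: "Ub \<in> borel_measurable M"
  proof -
    have "(\<lambda>\<omega>. h (\<lambda>j\<in>{..<m}. X (\<pi> (i*m+j)) \<omega>)) \<in> borel_measurable M" if "\<pi> \<in> G" "i < Ka" for \<pi> i
      using hZm[of "\<lambda>j. \<pi> (i*m+j)", OF ublk(1)[OF that]] unfolding Zv_def by simp
    then show ?thesis unfolding Ub_def by (intro borel_measurable_divide borel_measurable_sum) auto
  qed
  have WbM: "Wb \<in> borel_measurable M"
  proof -
    have "(\<lambda>\<omega>. eta m h (\<lambda>j\<in>{..<2*m}. X (\<pi> (i*(2*m)+j)) \<omega>)) \<in> borel_measurable M" if "\<pi> \<in> G" "i < Kb" for \<pi> i
      using etaM[of "\<lambda>j. \<pi> (i*(2*m)+j)", OF wblk(1)[OF that]] by simp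
    then show ?thesis unfolding Wb_def by (intro borel_measurable_divide borel_measurable_sum) auto
  qed
  have Wb0: "0 \<le> Wb \<omega>" if w: "\<omega> \<in> space M" for \<omega>
  proof -
    have "0 \<le> (\<Sum>\<pi>\<in>G. \<Sum>i<Kb. eta m h (\<lambda>j\<in>{..<2*m}. X (\<pi> (i*(2*m)+j)) \<omega>))"
    proof (intro sum_nonneg)
      fix \<pi> i assume pi: "\<pi> \<in> G" "i \<in> {..<Kb}"
      then have "i < Kb" by simp
      then show "0 \<le> eta m h (\<lambda>j\<in>{..<2*m}. X (\<pi> (i*(2*m)+j)) \<omega>)"
        using etab[of "\<lambda>j. \<pi> (i*(2*m)+j)" \<omega>, OF wblk(1)[OF pi(1) \<open>i < Kb\<close>] w] by auto
    qed
    then show ?thesis unfolding Wb_def by simp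
  qed
  have R1: "(\<Sum>\<pi>\<in>G. \<Sum>i<Ka. Y1 \<pi> i \<omega>) / (real (card G) * real Ka) = Ub \<omega> - \<theta>" for \<omega>
  proof -
    have "(\<Sum>\<pi>\<in>G. \<Sum>i<Ka. Y1 \<pi> i \<omega>) = (\<Sum>\<pi>\<in>G. \<Sum>i<Ka. h (\<lambda>j\<in>{..<m}. X (\<pi> (i*m+j)) \<omega>)) - real (card G) * real Ka * \<theta>"
      unfolding Y1_def Zv_def by (simp add: sum_subtractf)
    then show ?thesis unfolding Ub_def using cG Ka by (simp add: diff_divide_distrib)
  qed
  have R2: "(\<Sum>\<pi>\<in>G. \<Sum>i<Ka. Y2 \<pi> i \<omega>) / (real (card G) * real Ka) = \<theta> - Ub \<omega>" for \<omega>
  proof -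
    have "(\<Sum>\<pi>\<in>G. \<Sum>i<Ka. Y2 \<pi> i \<omega>) = real (card G) * real Ka * \<theta> - (\<Sum>\<pi>\<in>G. \<Sum>i<Ka. h (\<lambda>j\<in>{..<m}. X (\<pi> (i*m+j)) \<omega>))"
      unfolding Y2_def Zv_def by (simp add: sum_subtractf)
    then show ?thesis unfolding Ub_def using cG Ka by (simp add: diff_divide_distrib)
  qed
  have R3: "(\<Sum>\<pi>\<in>G. \<Sum>i<Kb. Y3 \<pi> i \<omega>) / (real (card G) * real Kb) = V - Wb \<omega>" for \<omega>
  proof -
    have "(\<Sum>\<pi>\<in>G. \<Sum>i<Kb. Y3 \<pi> i \<omega>) = real (card G) * real Kb * V - (\<Sum>\<pi>\<in>G. \<Sum>i<Kb. eta m h (\<lambda>j\<in>{..<2*m}. X (\<pi> (i*(2*m)+j)) \<omega>))"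
      unfolding Y3_def by (simp add: sum_subtractf)
    then show ?thesis unfolding Wb_def using cG Kb by (simp add: diff_divide_distrib)
  qed
  define t1 where "t1 = sqrt (2 * V * L / Ka) + 2 * L / (3 * Ka)"
  define t3 where "t3 = sqrt (2 * (V/2) * L / Kb) + 2 * L / (3 * Kb)"
  define E1 where "E1 = {\<omega> \<in> space M. t1 \<le> Ub \<omega> - \<theta>}"
  define E2 where "E2 = {\<omega> \<in> space M. t1 \<le> \<theta> - Ub \<omega>}"
  define E3 where "E3 = {\<omega> \<in> space M. t3 \<le> V - Wb \<omega>}"
  have E1s: "E1 \<in> sets M" unfolding E1_def using UbM by measurable
  have E2s: "E2 \<in> sets M" unfolding E2_def using UbM by measurable
  have E3s: "E3 \<in> sets M" unfolding E3_def using WbM by measurable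
  have P1: "prob E1 \<le> \<delta> / 3" using C1 unfolding R1 E1_def t1_def eL .
  have P2: "prob E2 \<le> \<delta> / 3" using C2 unfolding R2 E2_def t1_def eL .
  have P3: "prob E3 \<le> \<delta> / 3" using C3 unfolding R3 E3_def t3_def eL .
  have PB: "prob (E1 \<union> E2 \<union> E3) \<le> \<delta>"
  proof -
    have "prob (E1 \<union> E2 \<union> E3) \<le> prob (E1 \<union> E2) + prob E3"
      by (rule measure_subadditive) (use E1s E2s E3s in auto)
    also have "prob (E1 \<union> E2) \<le> prob E1 + prob E2"
      by (rule measure_subadditive[OF E1s E2s]) auto
    finally show ?thesis using P1 P2 P3 by linarith
  qed
  define RHS where "RHS w = sqrt (2 * w / real (n div m) * L) + (sqrt 2 / 2 + sqrt 42 / 6) * sqrt (2 / (real (n div m) * real (n div (2 * m)))) * L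
             + 4 / (3 * real (n div m)) * L" for w
  define S where "S = {\<omega> \<in> space M. \<bar>ustat n m h (\<lambda>i. X i \<omega>) - \<theta>\<bar> \<le> RHS (ustat n (2*m) (eta m h) (\<lambda>i. X i \<omega>))}"
  have Seq: "S = {\<omega> \<in> space M. \<bar>Ub \<omega> - \<theta>\<bar> \<le> RHS (Wb \<omega>)}"
    unfolding S_def
  proof (rule Collect_cong)
    fix \<omega> show "(\<omega> \<in> space M \<and> \<bar>ustat n m h (\<lambda>i. X i \<omega>) - \<theta>\<bar> \<le> RHS (ustat n (2*m) (eta m h) (\<lambda>i. X i \<omega>)))
      = (\<omega> \<in> space M \<and> \<bar>Ub \<omega> - \<theta>\<bar> \<le> RHS (Wb \<omega>))"
      using Ueq[of \<omega>] Weq[of \<omega>] by auto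
  qed
  have Ss: "S \<in> sets M"
  proof -
    have q: "(\<lambda>\<omega>. 2 * Wb \<omega> / real (n div m) * L) \<in> borel_measurable M"
      using WbM by (intro borel_measurable_times borel_measurable_divide borel_measurable_const) auto
    have sq: "(\<lambda>\<omega>. sqrt (2 * Wb \<omega> / real (n div m) * L)) \<in> borel_measurable M"
      by (rule measurable_compose[OF q borel_measurable_sqrt])
    have r: "(\<lambda>\<omega>. RHS (Wb \<omega>)) \<in> borel_measurable M"
      unfolding RHS_def by (intro borel_measurable_add sq borel_measurable_const)
    have l: "(\<lambda>\<omega>. \<bar>Ub \<omega> - \<theta>\<bar>) \<in> borel_measurable M"
      by (intro borel_measurable_abs borel_measurable_diff UbM borel_measurable_const)
    show ?thesis unfolding Seq by (rule borel_measurable_le[OF l r])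
  qed
  have a0: "0 < real (n div m)" using Ka by (simp add: Ka_def)
  have b0: "0 < real (n div (2 * m))" using Kb by (simp add: Kb_def)
  have sub: "space M - (E1 \<union> E2 \<union> E3) \<subseteq> S"
  proof
    fix \<omega> assume "\<omega> \<in> space M - (E1 \<union> E2 \<union> E3)"
    then have w: "\<omega> \<in> space M" and n1: "Ub \<omega> - \<theta> < t1" and n2: "\<theta> - Ub \<omega> < t1" and n3: "V - Wb \<omega> < t3"
      unfolding E1_def E2_def E3_def by auto
    have "\<bar>Ub \<omega> - \<theta>\<bar> \<le> t1" using n1 n2 by linarith
    have "\<bar>Ub \<omega> - \<theta>\<bar> \<le> RHS (Wb \<omega>)"
      unfolding RHS_def
    proof (rule final_arith[OF Vb(1) Wb0[OF w] Lp a0 b0])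
      show "V - Wb \<omega> < sqrt (2 * (V / 2) * L / real (n div (2 * m))) + 2 * L / (3 * real (n div (2 * m)))"
        using n3 unfolding t3_def Kb_def by simp
      show "\<bar>Ub \<omega> - \<theta>\<bar> \<le> sqrt (2 * V * L / real (n div m)) + 2 * L / (3 * real (n div m))"
        using \<open>\<bar>Ub \<omega> - \<theta>\<bar> \<le> t1\<close> unfolding t1_def Ka_def by simp
    qed
    then show "\<omega> \<in> S" unfolding Seq using w by simp
  qed
  have main1: "1 - \<delta> \<le> prob S"
  proof -
    have "prob (space M - (E1 \<union> E2 \<union> E3)) = 1 - prob (E1 \<union> E2 \<union> E3)"
      by (rule prob_compl) (use E1s E2s E3s in auto)
    moreover have "prob (space M - (E1 \<union> E2 \<union> E3)) \<le> prob S" by (rule finite_measure_mono[OF sub Ss])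
    ultimately show ?thesis using PB by linarith
  qed
  have n0: "0 < n" using n m0 by simp
  have main2: "1 - \<delta> \<le> measure M {\<omega> \<in> space M. \<bar>ustat n m h (\<lambda>i. X i \<omega>) - \<theta>\<bar> \<le>
             sqrt (2 * real m * ustat n (2*m) (eta m h) (\<lambda>i. X i \<omega>) / real n * L)
             + (4 + sqrt 2 * (3 + sqrt 21)) * real m / (3 * real n) * L}" if dv: "(2 * m) dvd n"
  proof -
    have "{\<omega> \<in> space M. \<bar>ustat n m h (\<lambda>i. X i \<omega>) - \<theta>\<bar> \<le>
             sqrt (2 * real m * ustat n (2*m) (eta m h) (\<lambda>i. X i \<omega>) / real n * L)
             + (4 + sqrt 2 * (3 + sqrt 21)) * real m / (3 * real n) * L} = S"
      unfolding S_def RHS_def rhs_eq[OF dv m0 n0] ..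
    then show ?thesis using main1 by simp
  qed
  note main1' = main1[unfolded S_def RHS_def]
  show ?thesis
    unfolding Let_def \<mu>_def[symmetric] \<nu>_def[symmetric] \<theta>_def[symmetric] L_def[symmetric]
    using main1' main2 by blast
qed


end
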